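(* Let $\alpha,\beta>0$, $\lambda\in\mathbb{R}$ and $a,b>0$. If $X\sim\mathrm{GIG}(\lambda,a\alpha,b)$ and $Y\sim\mathrm{GIG}(\lambda,b\beta,a)$ are independent and $(U,V)=F^{+,\alpha,\beta}_{\mathrm{GIG}}(X,Y)$, then $U,V$ are independent with $U\sim\mathrm{GIG}(\lambda,b\alpha,a)$ and $V\sim\mathrm{GIG}(\lambda,a\beta,b)$.
   Context: $\mathbb{R}_+=(0,\infty)$. For $\lambda\in\mathbb{R}$ and $A,B>0$, $\mathrm{GIG}(\lambda,A,B)$ is the generalized inverse Gaussian distribution on $\mathbb{R}_+$ with density proportional to $x^{\lambda-1}e^{-Ax-Bx^{-1}}$. $F^{+,\alpha,\beta}_{\mathrm{GIG}}:\mathbb{R}_+^2\to\mathbb{R}_+^2$, $F^{+,\alpha,\beta}_{\mathrm{GIG}}(x,y)=\left(y\frac{1+\beta xy}{1+\alpha xy},\ x\frac{1+\alpha xy}{1+\beta xy}\right)$. *)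

theory Defs
  imports "HOL-Probability.Probability"
begin

definition gig_kernel :: "real \<Rightarrow> real \<Rightarrow> real \<Rightarrow> real \<Rightarrow> real" where
  "gig_kernel lam A B x = (if 0 < x then x powr (lam - 1) * exp (- A * x - B / x) else 0)"

definition gig_const :: "real \<Rightarrow> real \<Rightarrow> real \<Rightarrow> real" where
  "gig_const lam A B = (\<integral>x. gig_kernel lam A B x \<partial>lborel)"

definition gig_density :: "real \<Rightarrow> real \<Rightarrow> real \<Rightarrow> real \<Rightarrow> ennreal" where
  "gig_density lam A B x = ennreal (gig_kernel lam A B x / gig_const lam A B)"

definition F_GIG :: "real \<Rightarrow> real \<Rightarrow> real \<times> real \<Rightarrow> real \<times> real" where
  "F_GIG \<alpha> \<beta> p = (case p of (x, y) \<Rightarrow>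
     (y * (1 + \<beta> * x * y) / (1 + \<alpha> * x * y), x * (1 + \<alpha> * x * y) / (1 + \<beta> * x * y)))"

end

theory Submission
  imports Defs
begin

lemma F_meas[measurable]: "F_GIG al be \<in> (lborel \<Otimes>\<^sub>M lborel) \<rightarrow>\<^sub>M (lborel \<Otimes>\<^sub>M lborel)"
  unfolding F_GIG_def split_beta' by measurable

lemma subst1:
  fixes c :: real and \<phi> \<psi> :: "real \<Rightarrow> ennreal"
  assumes c: "c > 0" and [measurable]: "\<phi> \<in> borel_measurable borel"
    and eq: "\<And>s. ennreal c * \<phi> (c * s) = \<psi> s"
  shows "(\<integral>\<^sup>+y. \<phi> y \<partial>lborel) = (\<integral>\<^sup>+s. \<psi> s \<partial>lborel)"
proof -
  have "(\<integral>\<^sup>+y. \<phi> y \<partial>lborel) = ennreal \<bar>c\<bar> * (\<integral>\<^sup>+x. \<phi> (0 + c * x) \<partial>lborel)"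
    by (rule nn_integral_real_affine) (use c in auto)
  also have "\<dots> = (\<integral>\<^sup>+x. ennreal c * \<phi> (c * x) \<partial>lborel)"
    using c by (subst nn_integral_cmult) auto
  also have "\<dots> = (\<integral>\<^sup>+s. \<psi> s \<partial>lborel)" using eq by simp
  finally show ?thesis .
qed

lemma key:
  fixes H :: "real \<times> real \<Rightarrow> ennreal" and al be :: real
  assumes Hm[measurable]: "H \<in> borel_measurable (lborel \<Otimes>\<^sub>M lborel)" and al: "al > 0" and be: "be > 0"
  shows "(\<integral>\<^sup>+p. H (F_GIG al be p) * indicator ({0<..} \<times> {0<..}) p \<partial>(lborel \<Otimes>\<^sub>M lborel))
       = (\<integral>\<^sup>+p. H p * indicator ({0<..} \<times> {0<..}) p \<partial>(lborel \<Otimes>\<^sub>M lborel))"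
proof -
  have P: "pair_sigma_finite lborel lborel" by unfold_locales
  define G where "G s = (1 + be * s) / (1 + al * s)" for s :: real
  have Gpos: "s > 0 \<Longrightarrow> G s > 0" for s using al be unfolding G_def by (intro divide_pos_pos) (auto intro: add_pos_pos)
  have Geq: "F_GIG al be (x, y) = (y * G (x * y), x / G (x * y))" for x y
    unfolding F_GIG_def G_def by (simp add: mult.assoc)
  have [measurable]: "G \<in> borel_measurable borel" unfolding G_def by measurable
  define I :: "real \<Rightarrow> ennreal" where "I = indicator {0<..}"
  have [measurable]: "I \<in> borel_measurable borel" unfolding I_def by measurable
  define \<psi>1 where "\<psi>1 x s = I x * I s * ennreal (1 / x) * H (s / x * G s, x / G s)" for x s
  define \<psi>2 where "\<psi>2 s v = I s * I v * ennreal (1 / v) * H (s / v, v)" for s v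
  define \<psi>3 where "\<psi>3 u v = I u * I v * H (u, v)" for u v
  have m1[measurable]: "case_prod \<psi>1 \<in> borel_measurable (lborel \<Otimes>\<^sub>M lborel)"
    unfolding \<psi>1_def split_beta' by measurable
  have m2[measurable]: "case_prod \<psi>2 \<in> borel_measurable (lborel \<Otimes>\<^sub>M lborel)"
    unfolding \<psi>2_def split_beta' by measurable
  have "(\<integral>\<^sup>+p. H (F_GIG al be p) * indicator ({0<..} \<times> {0<..}) p \<partial>(lborel \<Otimes>\<^sub>M lborel))
      = (\<integral>\<^sup>+x. \<integral>\<^sup>+y. H (F_GIG al be (x, y)) * (I x * I y) \<partial>lborel \<partial>lborel)"
    by (subst lborel.nn_integral_fst[symmetric]) (auto simp: I_def indicator_times)
  also have "\<dots> = (\<integral>\<^sup>+x. \<integral>\<^sup>+s. \<psi>1 x s \<partial>lborel \<partial>lborel)"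
  proof (rule nn_integral_cong)
    fix x :: real
    show "(\<integral>\<^sup>+y. H (F_GIG al be (x, y)) * (I x * I y) \<partial>lborel) = (\<integral>\<^sup>+s. \<psi>1 x s \<partial>lborel)"
    proof (cases "x > 0")
      case True
      show ?thesis
      proof (rule subst1[of "1/x"])
        fix s :: real
        have "x * (1 / x * s) = s" using True by simp
        moreover have "I (1 / x * s) = I s" using True unfolding I_def
          by (auto simp: indicator_def zero_less_mult_iff zero_less_divide_iff)
        ultimately show "ennreal (1 / x) * (H (F_GIG al be (x, 1 / x * s)) * (I x * I (1 / x * s))) = \<psi>1 x s"
          unfolding \<psi>1_def Geq by (simp add: mult_ac)
      qed (use True in auto)
    next
      case False
      then show ?thesis unfolding \<psi>1_def I_def by simp
    qed
  qed
  also have "\<dots> = (\<integral>\<^sup>+s. \<integral>\<^sup>+x. \<psi>1 x s \<partial>lborel \<partial>lborel)"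
    using pair_sigma_finite.Fubini'[OF P m1] by simp
  also have "\<dots> = (\<integral>\<^sup>+s. \<integral>\<^sup>+v. \<psi>2 s v \<partial>lborel \<partial>lborel)"
  proof (rule nn_integral_cong)
    fix s :: real
    show "(\<integral>\<^sup>+x. \<psi>1 x s \<partial>lborel) = (\<integral>\<^sup>+v. \<psi>2 s v \<partial>lborel)"
    proof (cases "s > 0")
      case True
      note g = Gpos[OF True]
      show ?thesis
      proof (rule subst1[of "G s"])
        fix v :: real
        show "ennreal (G s) * \<psi>1 (G s * v) s = \<psi>2 s v"
        proof (cases "v > 0")
          case True
          have e1: "s / (G s * v) * G s = s / v" using g by simp
          have e2: "G s * v / G s = v" using g by simp
          have e3: "ennreal (G s) * ennreal (1 / (G s * v)) = ennreal (1 / v)"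
            using g True by (simp add: ennreal_mult[symmetric])
          have "I (G s * v) = 1" "I v = 1" "I s = 1" using g True \<open>s > 0\<close> by (auto simp: I_def)
          then show ?thesis unfolding \<psi>1_def \<psi>2_def e1 e2 using e3
            by (simp add: mult.assoc[symmetric])
        next
          case False
          then have "I (G s * v) = 0" "I v = 0" using g by (auto simp: I_def zero_less_mult_iff)
          then show ?thesis unfolding \<psi>1_def \<psi>2_def by simp
        qed
      qed (use g \<psi>1_def in auto)
    next
      case False
      then show ?thesis unfolding \<psi>1_def \<psi>2_def I_def by simp
    qed
  qed
  also have "\<dots> = (\<integral>\<^sup>+v. \<integral>\<^sup>+s. \<psi>2 s v \<partial>lborel \<partial>lborel)"
    using pair_sigma_finite.Fubini'[OF P m2] by simp
  also have "\<dots> = (\<integral>\<^sup>+v. \<integral>\<^sup>+u. \<psi>3 u v \<partial>lborel \<partial>lborel)"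
  proof (rule nn_integral_cong)
    fix v :: real
    show "(\<integral>\<^sup>+s. \<psi>2 s v \<partial>lborel) = (\<integral>\<^sup>+u. \<psi>3 u v \<partial>lborel)"
    proof (cases "v > 0")
      case True
      show ?thesis
      proof (rule subst1[of v])
        fix u :: real
        have "I (v * u) = I u" using True unfolding I_def
          by (auto simp: indicator_def zero_less_mult_iff zero_less_divide_iff)
        moreover have "ennreal v * ennreal (1 / v) = 1" using True
          by (simp add: ennreal_mult[symmetric])
        moreover have "v * u / v = u" using True by simp
        ultimately have "ennreal v * \<psi>2 (v * u) v = ennreal v * (I u * I v * ennreal (1 / v) * H (u, v))"
          unfolding \<psi>2_def by (simp only:)
        also have "\<dots> = (I u * I v * H (u, v)) * (ennreal v * ennreal (1 / v))"
          by (simp only: ac_simps)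
        finally have "ennreal v * \<psi>2 (v * u) v = (I u * I v * H (u, v)) * (ennreal v * ennreal (1 / v))" .
        then show "ennreal v * \<psi>2 (v * u) v = \<psi>3 u v"
          unfolding \<psi>3_def using \<open>ennreal v * ennreal (1 / v) = 1\<close> by simp
      qed (use True \<psi>2_def in auto)
    next
      case False
      then show ?thesis unfolding \<psi>2_def \<psi>3_def I_def by simp
    qed
  qed
  also have "\<dots> = (\<integral>\<^sup>+p. H p * indicator ({0<..} \<times> {0<..}) p \<partial>(lborel \<Otimes>\<^sub>M lborel))"
    by (subst pair_sigma_finite.nn_integral_snd[OF P, symmetric]) (auto simp: \<psi>3_def I_def indicator_times mult_ac)
  finally show ?thesis .
qed
lemma kern_id:
  fixes x y al be lam a b :: real
  assumes x: "x > 0" and y: "y > 0" and al: "al > 0" and be: "be > 0" and a: "a > 0" and b: "b > 0"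
  defines "u \<equiv> y * (1 + be * x * y) / (1 + al * x * y)"
      and "v \<equiv> x * (1 + al * x * y) / (1 + be * x * y)"
  shows "gig_kernel lam (a * al) b x * gig_kernel lam (b * be) a y
       = gig_kernel lam (b * al) a u * gig_kernel lam (a * be) b v" and "u > 0" and "v > 0"
proof -
  have d1: "1 + al * x * y > 0" using al x y by (simp add: add_pos_pos)
  have d2: "1 + be * x * y > 0" using be x y by (simp add: add_pos_pos)
  have n1: "1 + al * (x * y) \<noteq> 0" "1 + be * (x * y) \<noteq> 0" "(1 + al * (x * y)) * (1 + be * (x * y)) \<noteq> 0"
    using d1 d2 by (auto simp: mult.assoc)
  show u: "u > 0" unfolding u_def using d1 d2 x y by simp
  show v: "v > 0" unfolding v_def using d1 d2 x y by simp
  have uv: "u * v = x * y" unfolding u_def v_def using n1 by (simp add: field_simps)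
  have p: "x powr (lam - 1) * y powr (lam - 1) = u powr (lam - 1) * v powr (lam - 1)"
    using uv x y u v by (simp add: powr_mult[symmetric])
  define A where "A = 1 + al * x * y"
  define B where "B = 1 + be * x * y"
  have A: "A > 0" and B: "B > 0" using d1 d2 unfolding A_def B_def by auto
  have uA: "u = y * B / A" and vA: "v = x * A / B" unfolding u_def v_def A_def B_def by auto
  have ea: "be * v + 1 / u = al * x + 1 / y"
  proof -
    have "be * v + 1 / u = A * (be * x * y + 1) / (y * B)"
      unfolding uA vA using A B x y by (simp add: field_simps)
    also have "\<dots> = A * B / (y * B)" unfolding B_def by (simp add: add.commute)
    also have "\<dots> = A / y" using B y by simp
    also have "\<dots> = al * x + 1 / y" using y unfolding A_def by (simp add: field_simps)
    finally show ?thesis .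
  qed
  have eb: "al * u + 1 / v = be * y + 1 / x"
  proof -
    have "al * u + 1 / v = B * (al * x * y + 1) / (x * A)"
      unfolding uA vA using A B x y by (simp add: field_simps)
    also have "\<dots> = B * A / (x * A)" unfolding A_def by (simp add: add.commute)
    also have "\<dots> = B / x" using A x by simp
    also have "\<dots> = be * y + 1 / x" using x unfolding B_def by (simp add: field_simps)
    finally show ?thesis .
  qed
  have e: "(- (a * al) * x - b / x) + (- (b * be) * y - a / y) = (- (b * al) * u - a / u) + (- (a * be) * v - b / v)"
  proof -
    have "(- (a * al) * x - b / x) + (- (b * be) * y - a / y) = - a * (al * x + 1 / y) - b * (be * y + 1 / x)"
      by (simp add: algebra_simps)
    also have "\<dots> = - a * (be * v + 1 / u) - b * (al * u + 1 / v)" using ea eb by simp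
    also have "\<dots> = (- (b * al) * u - a / u) + (- (a * be) * v - b / v)"
      by (simp add: algebra_simps)
    finally show ?thesis .
  qed
  have "gig_kernel lam (a * al) b x * gig_kernel lam (b * be) a y
      = (x powr (lam - 1) * y powr (lam - 1)) * exp ((- (a * al) * x - b / x) + (- (b * be) * y - a / y))"
    using x y by (simp add: gig_kernel_def exp_add)
  also have "\<dots> = (u powr (lam - 1) * v powr (lam - 1)) * exp ((- (b * al) * u - a / u) + (- (a * be) * v - b / v))"
    using p e by simp
  also have "\<dots> = gig_kernel lam (b * al) a u * gig_kernel lam (a * be) b v"
    using u v by (simp add: gig_kernel_def exp_add)
  finally show "gig_kernel lam (a * al) b x * gig_kernel lam (b * be) a y
       = gig_kernel lam (b * al) a u * gig_kernel lam (a * be) b v" .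
qed
lemma kern_nonneg: "gig_kernel lam A B x \<ge> 0"
  unfolding gig_kernel_def by auto

lemma kern_pos: "x > 0 \<Longrightarrow> gig_kernel lam A B x > 0"
  unfolding gig_kernel_def by auto

lemma kern_meas[measurable]: "gig_kernel lam A B \<in> borel_measurable borel"
  unfolding gig_kernel_def by measurable

lemma dens_meas[measurable]: "gig_density lam A B \<in> borel_measurable borel"
  unfolding gig_density_def by measurable

lemma const_from_distr:
  assumes "prob_space M" and D: "distributed M lborel X (gig_density lam A B)"
  shows "gig_const lam A B > 0"
    and "(\<integral>\<^sup>+x. ennreal (gig_kernel lam A B x) \<partial>lborel) = ennreal (gig_const lam A B)"
proof -
  interpret prob_space M by fact
  have "prob_space (density lborel (gig_density lam A B))"
    unfolding distributed_distr_eq_density[OF D, symmetric]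
    by (rule prob_space_distr) (use D in \<open>simp add: distributed_def\<close>)
  then have one: "(\<integral>\<^sup>+x. gig_density lam A B x \<partial>lborel) = 1"
    using prob_space.emeasure_space_1 emeasure_density[of "gig_density lam A B" lborel UNIV]
    by force
  show pos: "gig_const lam A B > 0"
  proof (rule ccontr)
    assume "\<not> gig_const lam A B > 0"
    then have "gig_density lam A B x = 0" for x
      unfolding gig_density_def using kern_nonneg[of lam A B x]
      by (simp add: ennreal_eq_0_iff divide_nonneg_nonpos)
    with one show False by simp
  qed
  have "(\<integral>\<^sup>+x. ennreal (gig_kernel lam A B x) \<partial>lborel)
      = (\<integral>\<^sup>+x. ennreal (gig_const lam A B) * gig_density lam A B x \<partial>lborel)"
    using pos unfolding gig_density_def
    by (intro nn_integral_cong) (simp add: ennreal_mult[symmetric] kern_nonneg)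
  also have "\<dots> = ennreal (gig_const lam A B)"
    by (subst nn_integral_cmult) (auto simp: one)
  finally show "(\<integral>\<^sup>+x. ennreal (gig_kernel lam A B x) \<partial>lborel) = ennreal (gig_const lam A B)" .
qed

lemma const_from_nn:
  assumes "(\<integral>\<^sup>+x. ennreal (gig_kernel lam A B x) \<partial>lborel) = J" "J \<noteq> \<infinity>" "J \<noteq> 0"
  shows "gig_const lam A B > 0" "J = ennreal (gig_const lam A B)"
proof -
  have c: "gig_const lam A B = enn2real J"
    unfolding gig_const_def using assms(1)
    by (subst integral_eq_nn_integral) (auto simp: kern_nonneg)
  show "J = ennreal (gig_const lam A B)" unfolding c using assms(2) by (simp add: less_top)
  show "gig_const lam A B > 0" using assms(2,3) by (simp add: c enn2real_positive_iff top.not_eq_extremum zero_less_iff_neq_zero)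
qed

lemma marg_fst:
  assumes "prob_space P" "prob_space R" "sets N = sets P"
  shows "distr (P \<Otimes>\<^sub>M R) N fst = P"
proof (rule measure_eqI)
  show "sets (distr (P \<Otimes>\<^sub>M R) N fst) = sets P" using assms by simp
  fix A assume "A \<in> sets (distr (P \<Otimes>\<^sub>M R) N fst)"
  then have A: "A \<in> sets P" using assms by simp
  have "emeasure (distr (P \<Otimes>\<^sub>M R) N fst) A = emeasure (P \<Otimes>\<^sub>M R) (fst -` A \<inter> space (P \<Otimes>\<^sub>M R))"
    using A assms by (intro emeasure_distr) (simp_all add: measurable_cong_sets[OF refl assms(3)])
  also have "fst -` A \<inter> space (P \<Otimes>\<^sub>M R) = A \<times> space R"
    using A sets.sets_into_space by (auto simp: space_pair_measure)
  also have "emeasure (P \<Otimes>\<^sub>M R) (A \<times> space R) = emeasure P A * emeasure R (space R)"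
    by (rule sigma_finite_measure.emeasure_pair_measure_Times[OF prob_space_imp_sigma_finite[OF assms(2)]]) (use A in auto)
  finally show "emeasure (distr (P \<Otimes>\<^sub>M R) N fst) A = emeasure P A"
    using assms(2) by (simp add: prob_space.emeasure_space_1)
qed

lemma marg_snd:
  assumes "prob_space P" "prob_space R" "sets N = sets R"
  shows "distr (P \<Otimes>\<^sub>M R) N snd = R"
proof (rule measure_eqI)
  show "sets (distr (P \<Otimes>\<^sub>M R) N snd) = sets R" using assms by simp
  fix A assume "A \<in> sets (distr (P \<Otimes>\<^sub>M R) N snd)"
  then have A: "A \<in> sets R" using assms by simp
  have "emeasure (distr (P \<Otimes>\<^sub>M R) N snd) A = emeasure (P \<Otimes>\<^sub>M R) (snd -` A \<inter> space (P \<Otimes>\<^sub>M R))"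
    using A assms by (intro emeasure_distr) (simp_all add: measurable_cong_sets[OF refl assms(3)])
  also have "snd -` A \<inter> space (P \<Otimes>\<^sub>M R) = space P \<times> A"
    using A sets.sets_into_space by (auto simp: space_pair_measure)
  also have "emeasure (P \<Otimes>\<^sub>M R) (space P \<times> A) = emeasure P (space P) * emeasure R A"
    by (rule sigma_finite_measure.emeasure_pair_measure_Times[OF prob_space_imp_sigma_finite[OF assms(2)]]) (use A in auto)
  finally show "emeasure (distr (P \<Otimes>\<^sub>M R) N snd) A = emeasure R A"
    using assms(1) by (simp add: prob_space.emeasure_space_1)
qed

lemma indep_var_lborel:
  fixes X Y :: "'a \<Rightarrow> real"
  assumes "prob_space M"
  shows "prob_space.indep_var M borel X borel Y \<longleftrightarrow> prob_space.indep_var M lborel X lborel Y"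
proof -
  have d1: "distr M borel Z = distr M lborel Z" for Z :: "'a \<Rightarrow> real"
    by (rule distr_cong) auto
  have d2: "distr M (borel \<Otimes>\<^sub>M borel) Z = distr M (lborel \<Otimes>\<^sub>M lborel) Z" for Z :: "'a \<Rightarrow> real \<times> real"
    by (rule distr_cong) (auto intro: sets_pair_measure_cong)
  show ?thesis
    using prob_space.indep_var_distribution_eq[OF assms, of borel X borel Y]
      prob_space.indep_var_distribution_eq[OF assms, of lborel X lborel Y]
    by (simp add: d1 d2)
qed

theorem corollary5p2:
  fixes M :: "'a measure" and X Y :: "'a \<Rightarrow> real"
    and \<alpha> \<beta> lam a b :: real
  assumes "prob_space M"
    and "\<alpha> > 0" and "\<beta> > 0" and "a > 0" and "b > 0"
    and "distributed M lborel X (gig_density lam (a * \<alpha>) b)"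
    and "distributed M lborel Y (gig_density lam (b * \<beta>) a)"
    and "prob_space.indep_var M borel X borel Y"
  shows "prob_space.indep_var M borel (\<lambda>\<omega>. fst (F_GIG \<alpha> \<beta> (X \<omega>, Y \<omega>)))
                               borel (\<lambda>\<omega>. snd (F_GIG \<alpha> \<beta> (X \<omega>, Y \<omega>)))
       \<and> distributed M lborel (\<lambda>\<omega>. fst (F_GIG \<alpha> \<beta> (X \<omega>, Y \<omega>))) (gig_density lam (b * \<alpha>) a)
       \<and> distributed M lborel (\<lambda>\<omega>. snd (F_GIG \<alpha> \<beta> (X \<omega>, Y \<omega>))) (gig_density lam (a * \<beta>) b)"
proof -
  interpret prob_space M by fact
  note al = \<open>\<alpha> > 0\<close> and be = \<open>\<beta> > 0\<close> and a = \<open>a > 0\<close> and b = \<open>b > 0\<close>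
  note DX = \<open>distributed M lborel X (gig_density lam (a * \<alpha>) b)\<close>
  note DY = \<open>distributed M lborel Y (gig_density lam (b * \<beta>) a)\<close>
  have Xm[measurable]: "X \<in> borel_measurable M" using DX by (simp add: distributed_def)
  have Ym[measurable]: "Y \<in> borel_measurable M" using DY by (simp add: distributed_def)
  define L2 where "L2 = (lborel \<Otimes>\<^sub>M lborel :: (real \<times> real) measure)"
  define Q where "Q = ({0<..} \<times> {0<..} :: (real \<times> real) set)"
  define k1 where "k1 = gig_kernel lam (a * \<alpha>) b"
  define k2 where "k2 = gig_kernel lam (b * \<beta>) a"
  define k3 where "k3 = gig_kernel lam (b * \<alpha>) a"
  define k4 where "k4 = gig_kernel lam (a * \<beta>) b"
  define C1 where "C1 = gig_const lam (a * \<alpha>) b"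
  define C2 where "C2 = gig_const lam (b * \<beta>) a"
  define C3 where "C3 = gig_const lam (b * \<alpha>) a"
  define C4 where "C4 = gig_const lam (a * \<beta>) b"
  have [measurable]: "k1 \<in> borel_measurable borel" "k2 \<in> borel_measurable borel"
    "k3 \<in> borel_measurable borel" "k4 \<in> borel_measurable borel"
    unfolding k1_def k2_def k3_def k4_def by measurable
  have knn: "k1 x \<ge> 0" "k2 x \<ge> 0" "k3 x \<ge> 0" "k4 x \<ge> 0" for x
    unfolding k1_def k2_def k3_def k4_def by (auto simp: kern_nonneg)
  have C1: "C1 > 0" "(\<integral>\<^sup>+x. ennreal (k1 x) \<partial>lborel) = ennreal C1"
    using const_from_distr[OF \<open>prob_space M\<close> DX] unfolding k1_def C1_def by auto
  have C2: "C2 > 0" "(\<integral>\<^sup>+x. ennreal (k2 x) \<partial>lborel) = ennreal C2"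
    using const_from_distr[OF \<open>prob_space M\<close> DY] unfolding k2_def C2_def by auto
  define D where "D = C1 * C2"
  have D: "D > 0" unfolding D_def using C1 C2 by simp
  define f where "f = (\<lambda>(x, y). gig_density lam (a * \<alpha>) b x * gig_density lam (b * \<beta>) a y)"
  define g where "g = (\<lambda>(u, v). ennreal (k3 u * k4 v / D))"
  have fm[measurable]: "f \<in> borel_measurable L2" unfolding f_def L2_def by measurable
  have gm[measurable]: "g \<in> borel_measurable L2" unfolding g_def L2_def by measurable
  have Fm[measurable]: "F_GIG \<alpha> \<beta> \<in> L2 \<rightarrow>\<^sub>M L2" unfolding L2_def by (rule F_meas)
  have DXY: "distributed M L2 (\<lambda>x. (X x, Y x)) f"
    unfolding L2_def f_def
    by (rule distributed_joint_indep[OF _ _ DX DY])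
       (use \<open>prob_space.indep_var M borel X borel Y\<close> indep_var_lborel[OF \<open>prob_space M\<close>] in \<open>auto intro: lborel.sigma_finite_measure_axioms\<close>)

  have feq: "f p = g (F_GIG \<alpha> \<beta> p) * indicator Q p" for p
  proof (cases p)
    case (Pair x y)
    show ?thesis
    proof (cases "x > 0 \<and> y > 0")
      case True
      then have x: "x > 0" and y: "y > 0" by auto
      note kid = kern_id(1)[OF x y al be a b, of lam]
      have "f p = ennreal (k1 x / C1) * ennreal (k2 y / C2)"
        unfolding Pair f_def gig_density_def k1_def k2_def C1_def C2_def by simp
      also have "\<dots> = ennreal (k1 x * k2 y / D)"
        using C1 C2 knn by (simp add: ennreal_mult[symmetric] D_def)
      also have "\<dots> = g (F_GIG \<alpha> \<beta> p)"
        unfolding g_def Pair F_GIG_def using kid by (simp add: k1_def k2_def k3_def k4_def)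
      finally show ?thesis using True by (simp add: Pair Q_def)
    next
      case False
      then have "k1 x = 0 \<or> k2 y = 0" unfolding k1_def k2_def gig_kernel_def by auto
      then have "f p = 0" unfolding Pair f_def gig_density_def k1_def k2_def by auto
      then show ?thesis using False by (simp add: Pair Q_def)
    qed
  qed
  have g0: "g p = g p * indicator Q p" for p
  proof (cases "p \<in> Q")
    case False
    then obtain u v where p: "p = (u, v)" and "u \<le> 0 \<or> v \<le> 0" unfolding Q_def by (cases p) auto
    then have "k3 u = 0 \<or> k4 v = 0" unfolding k3_def k4_def gig_kernel_def by auto
    then show ?thesis unfolding g_def p by auto
  qed simp
  have dF: "distr (density L2 f) L2 (F_GIG \<alpha> \<beta>) = density L2 g"
  proof (rule measure_eqI)
    fix A assume "A \<in> sets (distr (density L2 f) L2 (F_GIG \<alpha> \<beta>))"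
    then have A[measurable]: "A \<in> sets L2" by simp
    have sp: "space L2 = UNIV" unfolding L2_def by (simp add: space_pair_measure)
    have "emeasure (distr (density L2 f) L2 (F_GIG \<alpha> \<beta>)) A
        = emeasure (density L2 f) (F_GIG \<alpha> \<beta> -` A \<inter> space (density L2 f))"
      by (rule emeasure_distr) auto
    also have "\<dots> = (\<integral>\<^sup>+p. f p * indicator (F_GIG \<alpha> \<beta> -` A \<inter> space L2) p \<partial>L2)"
      by (subst emeasure_density) auto
    also have "\<dots> = (\<integral>\<^sup>+p. (g (F_GIG \<alpha> \<beta> p) * indicator A (F_GIG \<alpha> \<beta> p)) * indicator Q p \<partial>L2)"
      by (intro nn_integral_cong) (simp add: feq sp indicator_def mult_ac)
    also have "\<dots> = (\<integral>\<^sup>+p. (g p * indicator A p) * indicator Q p \<partial>L2)"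
      unfolding L2_def Q_def
      by (rule key[where H = "\<lambda>p. g p * indicator A p", OF _ al be]) (use gm A in \<open>simp add: L2_def\<close>)
    also have "\<dots> = (\<integral>\<^sup>+p. g p * indicator A p \<partial>L2)"
      by (intro nn_integral_cong) (metis g0 mult.assoc mult.commute)
    also have "\<dots> = emeasure (density L2 g) A"
      by (subst emeasure_density) auto
    finally show "emeasure (distr (density L2 f) L2 (F_GIG \<alpha> \<beta>)) A = emeasure (density L2 g) A" .
  qed simp
  define UV where "UV = (\<lambda>\<omega>. F_GIG \<alpha> \<beta> (X \<omega>, Y \<omega>))"
  have UVm[measurable]: "UV \<in> M \<rightarrow>\<^sub>M L2" unfolding UV_def L2_def by measurable
  have dUV: "distr M L2 UV = density L2 g"
  proof -
    have "distr M L2 UV = distr (distr M L2 (\<lambda>x. (X x, Y x))) L2 (F_GIG \<alpha> \<beta>)"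
      unfolding UV_def by (subst distr_distr) (auto simp: L2_def comp_def)
    also have "\<dots> = density L2 g"
      unfolding distributed_distr_eq_density[OF DXY] dF ..
    finally show ?thesis .
  qed
  have "prob_space (density L2 g)" unfolding dUV[symmetric] by (rule prob_space_distr) simp
  then have "emeasure (density L2 g) (space (density L2 g)) = 1" by (rule prob_space.emeasure_space_1)
  then have g1: "(\<integral>\<^sup>+p. g p \<partial>L2) = 1"
    using emeasure_density[OF gm, of "space L2"] by simp
  define J3 where "J3 = (\<integral>\<^sup>+x. ennreal (k3 x) \<partial>lborel)"
  define J4 where "J4 = (\<integral>\<^sup>+x. ennreal (k4 x) \<partial>lborel)"
  have gsplit: "ennreal (k3 x * k4 y / D) = ennreal (1 / D) * ennreal (k3 x) * ennreal (k4 y)" for x y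
  proof -
    have "k3 x * k4 y / D = (1 / D * k3 x) * k4 y" by simp
    moreover have "ennreal ((1 / D * k3 x) * k4 y) = ennreal (1 / D * k3 x) * ennreal (k4 y)"
      using knn D by (intro ennreal_mult) auto
    moreover have "ennreal (1 / D * k3 x) = ennreal (1 / D) * ennreal (k3 x)"
      using knn D by (intro ennreal_mult) auto
    ultimately show ?thesis by simp
  qed
  have "(\<integral>\<^sup>+p. g p \<partial>L2) = (\<integral>\<^sup>+u. \<integral>\<^sup>+v. ennreal (1 / D) * ennreal (k3 u) * ennreal (k4 v) \<partial>lborel \<partial>lborel)"
    unfolding L2_def
    by (subst lborel.nn_integral_fst[symmetric])
       (use gm in \<open>auto simp: L2_def g_def gsplit\<close>)
  also have "\<dots> = ennreal (1 / D) * (J3 * J4)"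
    unfolding J3_def J4_def
    by (simp add: nn_integral_cmult nn_integral_multc mult.assoc)
  finally have "ennreal (1 / D) * (J3 * J4) = 1" using g1 by simp
  then have "ennreal D * (ennreal (1 / D) * (J3 * J4)) = ennreal D" by simp
  then have J34: "J3 * J4 = ennreal D"
    using D by (simp add: mult.assoc[symmetric] ennreal_mult[symmetric])
  have "J3 \<noteq> 0" "J4 \<noteq> 0" using J34 D by auto
  moreover have "J3 \<noteq> \<infinity>" "J4 \<noteq> \<infinity>" using J34 \<open>J3 \<noteq> 0\<close> \<open>J4 \<noteq> 0\<close>
    by (auto simp: ennreal_mult_eq_top_iff)
  ultimately have C3: "C3 > 0" "J3 = ennreal C3" and C4: "C4 > 0" "J4 = ennreal C4"
    using const_from_nn[of lam "b * \<alpha>" a J3] const_from_nn[of lam "a * \<beta>" b J4]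
    unfolding J3_def J4_def C3_def C4_def k3_def k4_def by auto
  have CC: "C3 * C4 = D"
    using J34 C3 C4 D by (simp add: ennreal_mult[symmetric])

  define S3 where "S3 = gig_density lam (b * \<alpha>) a"
  define S4 where "S4 = gig_density lam (a * \<beta>) b"
  have S3m[measurable]: "S3 \<in> borel_measurable borel" unfolding S3_def by measurable
  have S4m[measurable]: "S4 \<in> borel_measurable borel" unfolding S4_def by measurable
  have gprod: "g = (\<lambda>(u, v). S3 u * S4 v)"
  proof (intro ext, clarify)
    fix u v :: real
    have e: "k3 u * k4 v / D = (k3 u / C3) * (k4 v / C4)" using CC by (simp add: CC[symmetric])
    have "ennreal (k3 u * k4 v / D) = ennreal (k3 u / C3) * ennreal (k4 v / C4)"
      unfolding e using knn C3 C4 by (intro ennreal_mult) auto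
    then show "g (u, v) = S3 u * S4 v"
      unfolding g_def S3_def S4_def gig_density_def k3_def[symmetric] k4_def[symmetric]
        C3_def[symmetric] C4_def[symmetric] by simp
  qed
  have P3: "prob_space (density lborel S3)"
  proof (rule prob_spaceI)
    have "emeasure (density lborel S3) (space (density lborel S3)) = (\<integral>\<^sup>+x. S3 x \<partial>lborel)"
      by (subst emeasure_density) auto
    also have "\<dots> = (\<integral>\<^sup>+x. ennreal (1 / C3) * ennreal (k3 x) \<partial>lborel)"
      unfolding S3_def gig_density_def k3_def[symmetric] C3_def[symmetric]
      using knn C3 by (intro nn_integral_cong) (simp add: ennreal_mult[symmetric])
    also have "\<dots> = ennreal (1 / C3) * J3" unfolding J3_def by (simp add: nn_integral_cmult)
    also have "\<dots> = 1" using C3 by (simp add: ennreal_mult[symmetric])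
    finally show "emeasure (density lborel S3) (space (density lborel S3)) = 1" .
  qed
  have P4: "prob_space (density lborel S4)"
  proof (rule prob_spaceI)
    have "emeasure (density lborel S4) (space (density lborel S4)) = (\<integral>\<^sup>+x. S4 x \<partial>lborel)"
      by (subst emeasure_density) auto
    also have "\<dots> = (\<integral>\<^sup>+x. ennreal (1 / C4) * ennreal (k4 x) \<partial>lborel)"
      unfolding S4_def gig_density_def k4_def[symmetric] C4_def[symmetric]
      using knn C4 by (intro nn_integral_cong) (simp add: ennreal_mult[symmetric])
    also have "\<dots> = ennreal (1 / C4) * J4" unfolding J4_def by (simp add: nn_integral_cmult)
    also have "\<dots> = 1" using C4 by (simp add: ennreal_mult[symmetric])
    finally show "emeasure (density lborel S4) (space (density lborel S4)) = 1" .
  qed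
  have dprod: "density L2 g = density lborel S3 \<Otimes>\<^sub>M density lborel S4"
    unfolding gprod L2_def
    by (rule pair_measure_density[symmetric])
       (auto intro: lborel.sigma_finite_measure_axioms prob_space_imp_sigma_finite[OF P4])
  have dUV2: "distr M L2 UV = density lborel S3 \<Otimes>\<^sub>M density lborel S4"
    using dUV dprod by simp
  have "(\<lambda>\<omega>. fst (UV \<omega>)) \<in> M \<rightarrow>\<^sub>M lborel"
    using measurable_compose[OF UVm, of fst lborel] by (simp add: L2_def comp_def)
  then have Um[measurable]: "(\<lambda>\<omega>. fst (UV \<omega>)) \<in> borel_measurable M" by simp
  have "(\<lambda>\<omega>. snd (UV \<omega>)) \<in> M \<rightarrow>\<^sub>M lborel"
    using measurable_compose[OF UVm, of snd lborel] by (simp add: L2_def comp_def)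
  then have Vm[measurable]: "(\<lambda>\<omega>. snd (UV \<omega>)) \<in> borel_measurable M" by simp
  have dU: "distr M lborel (\<lambda>\<omega>. fst (UV \<omega>)) = density lborel S3"
  proof -
    have "distr M lborel (\<lambda>\<omega>. fst (UV \<omega>)) = distr (distr M L2 UV) lborel fst"
      by (subst distr_distr) (use UVm in \<open>auto simp: L2_def comp_def\<close>)
    also have "\<dots> = density lborel S3" unfolding dUV2
      by (rule marg_fst[OF P3 P4]) simp
    finally show ?thesis .
  qed
  have dV: "distr M lborel (\<lambda>\<omega>. snd (UV \<omega>)) = density lborel S4"
  proof -
    have "distr M lborel (\<lambda>\<omega>. snd (UV \<omega>)) = distr (distr M L2 UV) lborel snd"
      by (subst distr_distr) (use UVm in \<open>auto simp: L2_def comp_def\<close>)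
    also have "\<dots> = density lborel S4" unfolding dUV2
      by (rule marg_snd[OF P3 P4]) simp
    finally show ?thesis .
  qed
  have ind: "indep_var lborel (\<lambda>\<omega>. fst (UV \<omega>)) lborel (\<lambda>\<omega>. snd (UV \<omega>))"
    unfolding indep_var_distribution_eq
    using dU dV dUV2 by (simp add: L2_def)
  show ?thesis
    using ind indep_var_lborel[OF \<open>prob_space M\<close>] dU dV Um Vm
    unfolding UV_def distributed_def S3_def S4_def
    by auto
qed

end
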